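(* Let $\mathcal H_A,\mathcal H_B$ be finite-dimensional Hilbert spaces, $U$ a unitary on $\mathcal H_A\otimes\mathcal H_B$, $\beta$ a density operator on $\mathcal H_B$, and let $\mathcal E[X]=\operatorname{Tr}_B[U(X\otimes\beta)U^\dagger]$. Let $\alpha$ be a density operator on $\mathcal H_A$ such that $\mathcal E[\alpha]$ is invertible. Then the Petz recovery map of $\mathcal E$ with reference $\alpha$, $$\hat{\mathcal E}_\alpha[X]=\sqrt{\alpha}\,\mathcal E^\dagger\!\left[\mathcal E[\alpha]^{-1/2}X\,\mathcal E[\alpha]^{-1/2}\right]\sqrt\alpha,$$ satisfies $$\hat{\mathcal E}_\alpha[X]=\operatorname{Tr}_B\!\left[U^\dagger\,\mathcal A_{\Omega}[X]\,U\right],\qquad \Omega:=U(\alpha\otimes\beta)U^\dagger,$$ where for a state $\Omega$ on $\mathcal H_A\otimes\mathcal H_B$ with $\operatorname{Tr}_B\Omega$ invertible, $$\mathcal A_{\Omega}[X]=\sqrt{\Omega}\left[\left((\operatorname{Tr}_B\Omega)^{-1/2}\,X\,(\operatorname{Tr}_B\Omega)^{-1/2}\right)\otimes\mathbb 1_B\right]\sqrt{\Omega}.$$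
   Context: $\mathcal E^\dagger$ denotes the adjoint map with respect to the Hilbert–Schmidt inner product, defined by $\operatorname{Tr}(\mathcal E[X]Y)=\operatorname{Tr}(X\mathcal E^\dagger[Y])$ for all operators $X,Y$. $\operatorname{Tr}_B$ is the partial trace over $\mathcal H_B$. *)

theory Defs
  imports "Jordan_Normal_Form.Matrix"
begin

text \<open>Finite-dimensional Hilbert spaces H_A, H_B are modelled as C^dA, C^dB;
operators are complex matrices. H_A tensor H_B is C^(dA*dB) with basis index
a*dB + b (Kronecker convention).\<close>

definition dag :: "complex mat \<Rightarrow> complex mat" where
  "dag A = mat (dim_col A) (dim_row A) (\<lambda>(i,j). cnj (A $$ (j,i)))"

definition tr :: "complex mat \<Rightarrow> complex" where
  "tr A = (\<Sum>i<dim_row A. A $$ (i,i))"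

definition tensor :: "complex mat \<Rightarrow> complex mat \<Rightarrow> complex mat" where
  "tensor A B = mat (dim_row A * dim_row B) (dim_col A * dim_col B)
     (\<lambda>(i,j). A $$ (i div dim_row B, j div dim_col B) * B $$ (i mod dim_row B, j mod dim_col B))"

definition ptrace_B :: "nat \<Rightarrow> nat \<Rightarrow> complex mat \<Rightarrow> complex mat" where
  "ptrace_B dA dB M = mat dA dA (\<lambda>(a,a'). \<Sum>b<dB. M $$ (a*dB + b, a'*dB + b))"

definition unitary :: "nat \<Rightarrow> complex mat \<Rightarrow> bool" where
  "unitary n U \<longleftrightarrow> U \<in> carrier_mat n n \<and> dag U * U = 1\<^sub>m n \<and> U * dag U = 1\<^sub>m n"

definition psd :: "nat \<Rightarrow> complex mat \<Rightarrow> bool" where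
  "psd n A \<longleftrightarrow> A \<in> carrier_mat n n \<and> dag A = A \<and>
     (\<forall>v \<in> carrier_vec n. 0 \<le> Re ((A *\<^sub>v v) \<bullet>c v))"

definition density :: "nat \<Rightarrow> complex mat \<Rightarrow> bool" where
  "density n \<rho> \<longleftrightarrow> psd n \<rho> \<and> tr \<rho> = 1"

definition msqrt :: "complex mat \<Rightarrow> complex mat" where
  "msqrt A = (THE B. psd (dim_row A) B \<and> B * B = A)"

definition minv :: "complex mat \<Rightarrow> complex mat" where
  "minv A = (THE B. B \<in> carrier_mat (dim_row A) (dim_row A) \<and>
              A * B = 1\<^sub>m (dim_row A) \<and> B * A = 1\<^sub>m (dim_row A))"

definition msqrt_inv :: "complex mat \<Rightarrow> complex mat" where
  "msqrt_inv A = minv (msqrt A)"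

text \<open>Hilbert-Schmidt adjoint of a map E from m x m to n x n matrices:
 Tr(E[X] Y) = Tr(X E^dag[Y]); fixed to 0 outside its domain to make it unique.\<close>
definition hs_adjoint :: "nat \<Rightarrow> nat \<Rightarrow> (complex mat \<Rightarrow> complex mat) \<Rightarrow> complex mat \<Rightarrow> complex mat" where
  "hs_adjoint m n E = (THE F.
     (\<forall>Y \<in> carrier_mat n n. F Y \<in> carrier_mat m m \<and>
        (\<forall>X \<in> carrier_mat m m. tr (E X * Y) = tr (X * F Y))) \<and>
     (\<forall>Y. Y \<notin> carrier_mat n n \<longrightarrow> F Y = 0\<^sub>m m m))"

definition channel :: "nat \<Rightarrow> nat \<Rightarrow> complex mat \<Rightarrow> complex mat \<Rightarrow> complex mat \<Rightarrow> complex mat" where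
  "channel dA dB U \<beta> X = ptrace_B dA dB (U * tensor X \<beta> * dag U)"

definition petz :: "nat \<Rightarrow> (complex mat \<Rightarrow> complex mat) \<Rightarrow> complex mat \<Rightarrow> complex mat \<Rightarrow> complex mat" where
  "petz d E \<alpha> X = msqrt \<alpha> * hs_adjoint d d E (msqrt_inv (E \<alpha>) * X * msqrt_inv (E \<alpha>)) * msqrt \<alpha>"

definition A_map :: "nat \<Rightarrow> nat \<Rightarrow> complex mat \<Rightarrow> complex mat \<Rightarrow> complex mat" where
  "A_map dA dB \<Omega> X = msqrt \<Omega> *
     tensor (msqrt_inv (ptrace_B dA dB \<Omega>) * X * msqrt_inv (ptrace_B dA dB \<Omega>)) (1\<^sub>m dB) * msqrt \<Omega>"

end

theory Submission
  imports Defs "Jordan_Normal_Form.Spectral_Radius"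
begin


lemma sum_div_mod: fixes a b :: nat shows "(\<Sum>k<a*b. g k) = (\<Sum>p<a. \<Sum>q<b. g (p*b+q))"
proof -
  have "(\<Sum>k<a*b. g k) = (\<Sum>p<a. sum g {p*b..<p*b+b})" using sum.nat_group[of g b a] by simp
  also have "\<dots> = (\<Sum>p<a. \<Sum>q<b. g (p*b+q))"
  proof (rule sum.cong[OF refl])
    fix p
    have "sum g {p*b..<p*b+b} = sum g {0+p*b..<b+p*b}" by (simp add: add.commute)
    also have "\<dots> = (\<Sum>q = 0..<b. g (q + p*b))" by (rule sum.shift_bounds_nat_ivl)
    finally show "sum g {p*b..<p*b+b} = (\<Sum>q<b. g (p*b+q))" by (simp add: atLeast0LessThan add.commute)
  qed
  finally show ?thesis .
qed

lemma sum_div_mod': fixes a b :: nat shows "(\<Sum>k<a*b. f (k div b) (k mod b)) = (\<Sum>p<a. \<Sum>q<b. f p q)"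
proof -
  have "(\<Sum>k<a*b. f (k div b) (k mod b)) = (\<Sum>p<a. \<Sum>q<b. f ((p*b+q) div b) ((p*b+q) mod b))"
    by (rule sum_div_mod)
  also have "\<dots> = (\<Sum>p<a. \<Sum>q<b. f p q)"
    by (intro sum.cong refl, auto)
  finally show ?thesis .
qed

lemma mult_index: "i < dim_row A \<Longrightarrow> j < dim_col B \<Longrightarrow> dim_col A = dim_row B \<Longrightarrow>
  (A * B) $$ (i,j) = (\<Sum>k<dim_col A. A $$ (i,k) * B $$ (k,j))"
  by (simp add: index_mult_mat scalar_prod_def atLeast0LessThan)

lemma dag_dim[simp]: "dim_row (dag A) = dim_col A" "dim_col (dag A) = dim_row A"
  by (auto simp: dag_def)

lemma dag_index[simp]: "i < dim_col A \<Longrightarrow> j < dim_row A \<Longrightarrow> dag A $$ (i,j) = cnj (A $$ (j,i))"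
  by (simp add: dag_def)

lemma dag_carrier[simp,intro]: "A \<in> carrier_mat n m \<Longrightarrow> dag A \<in> carrier_mat m n"
  unfolding carrier_mat_def by simp

lemma dag_dag[simp]: "dag (dag A) = A"
  by (rule eq_matI, auto)

lemma dag_mult: assumes "dim_col A = dim_row B" shows "dag (A * B) = dag B * dag A"
proof (rule eq_matI)
  fix i j assume that: "i < dim_row (dag B * dag A)" "j < dim_col (dag B * dag A)"
  show "dag (A * B) $$ (i, j) = (dag B * dag A) $$ (i, j)"
  proof -
    have ij: "i < dim_col B" "j < dim_row A" using that by auto
    have "dag (A * B) $$ (i, j) = cnj ((A*B) $$ (j,i))" using ij by (intro dag_index, auto)
    also have "\<dots> = cnj (\<Sum>k<dim_col A. A $$ (j,k) * B $$ (k,i))" using ij assms by (subst mult_index, auto)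
    also have "\<dots> = (\<Sum>k<dim_col A. dag B $$ (i,k) * dag A $$ (k,j))" using ij assms
      by (auto simp: mult.commute intro!: sum.cong)
    also have "\<dots> = (dag B * dag A) $$ (i, j)" using ij assms by (subst mult_index, auto)
    finally show ?thesis .
  qed
qed auto

lemma dag_one[simp]: "dag (1\<^sub>m n) = 1\<^sub>m n"
  by (rule eq_matI, auto)

lemma dag_zero[simp]: "dag (0\<^sub>m n m) = 0\<^sub>m m n"
  by (rule eq_matI, auto)

lemma tr_mult_comm: "A \<in> carrier_mat n m \<Longrightarrow> B \<in> carrier_mat m n \<Longrightarrow> tr (A * B) = tr (B * A)"
proof -
  assume A: "A \<in> carrier_mat n m" and B: "B \<in> carrier_mat m n"
  have d: "dim_row (A*B) = n" "dim_row (B*A) = m" using A B by auto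
  have "tr (A * B) = (\<Sum>i<n. \<Sum>k<m. A $$ (i,k) * B $$ (k,i))"
    unfolding tr_def d using A B by (auto intro!: sum.cong simp: mult_index simp del: index_mult_mat)
  also have "\<dots> = (\<Sum>k<m. \<Sum>i<n. B $$ (k,i) * A $$ (i,k))"
    by (subst sum.swap, simp add: mult.commute)
  also have "\<dots> = tr (B * A)"
    unfolding tr_def d using A B by (auto intro!: sum.cong simp: mult_index simp del: index_mult_mat)
  finally show ?thesis .
qed

lemma tensor_dim[simp]: "dim_row (tensor A B) = dim_row A * dim_row B"
   "dim_col (tensor A B) = dim_col A * dim_col B"
  by (auto simp: tensor_def)

lemma tensor_carrier[simp,intro]: "A \<in> carrier_mat a a' \<Longrightarrow> B \<in> carrier_mat b b' \<Longrightarrow>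
   tensor A B \<in> carrier_mat (a*b) (a'*b')"
  unfolding carrier_mat_def by simp

lemma tensor_index: "i < dim_row A * dim_row B \<Longrightarrow> j < dim_col A * dim_col B \<Longrightarrow>
  tensor A B $$ (i,j) = A $$ (i div dim_row B, j div dim_col B) * B $$ (i mod dim_row B, j mod dim_col B)"
  by (simp add: tensor_def)

lemma div_less_mult: "i < a * (b::nat) \<Longrightarrow> i div b < a"
  by (simp add: less_mult_imp_div_less)

lemma mod_less_mult: "i < a * (b::nat) \<Longrightarrow> i mod b < b"
  by (cases "b = 0", auto)

lemma dag_tensor: "dag (tensor A B) = tensor (dag A) (dag B)"
proof (rule eq_matI)
  fix i j assume i: "i < dim_row (tensor (dag A) (dag B))" and j: "j < dim_col (tensor (dag A) (dag B))"
  have a: "i div dim_col B < dim_col A" "i mod dim_col B < dim_col B"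
     "j div dim_row B < dim_row A" "j mod dim_row B < dim_row B"
    using i j by (auto intro: div_less_mult mod_less_mult)
  show "dag (tensor A B) $$ (i, j) = tensor (dag A) (dag B) $$ (i, j)"
  proof -
    have ij: "j < dim_row A * dim_row B" "i < dim_col A * dim_col B" using i j by auto
    have "dag (tensor A B) $$ (i, j) = cnj (tensor A B $$ (j,i))" using ij by (intro dag_index, auto)
    also have "\<dots> = cnj (A $$ (j div dim_row B, i div dim_col B) * B $$ (j mod dim_row B, i mod dim_col B))"
      using ij by (subst tensor_index, auto)
    also have "\<dots> = tensor (dag A) (dag B) $$ (i, j)"
      using i j a by (subst tensor_index, auto)
    finally show ?thesis .
  qed
qed auto

lemma tensor_mult: assumes "dim_col A = dim_row C" "dim_col B = dim_row D"
  shows "tensor A B * tensor C D = tensor (A * C) (B * D)"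
proof (rule eq_matI)
  fix i j assume i: "i < dim_row (tensor (A * C) (B * D))" and j: "j < dim_col (tensor (A * C) (B * D))"
  have i1: "i div dim_row B < dim_row A" "i mod dim_row B < dim_row B" using i
    by (auto simp: div_less_mult mod_less_mult)
  have j1: "j div dim_col D < dim_col C" "j mod dim_col D < dim_col D" using j
    by (auto simp: div_less_mult mod_less_mult)
  have ii: "i < dim_row A * dim_row B" "j < dim_col C * dim_col D" using i j by auto
  have "(tensor A B * tensor C D) $$ (i,j) = (\<Sum>k<dim_col A * dim_col B. tensor A B $$ (i,k) * tensor C D $$ (k,j))"
    using ii assms by (subst mult_index, auto)
  also have "\<dots> = (\<Sum>k<dim_col A * dim_col B.
     A $$ (i div dim_row B, k div dim_col B) * B $$ (i mod dim_row B, k mod dim_col B) *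
     (C $$ (k div dim_col B, j div dim_col D) * D $$ (k mod dim_col B, j mod dim_col D)))"
    using ii assms by (intro sum.cong refl, subst tensor_index, simp, simp, subst tensor_index, auto)
  also have "\<dots> = (\<Sum>p<dim_col A. \<Sum>q<dim_col B.
     A $$ (i div dim_row B, p) * B $$ (i mod dim_row B, q) *
     (C $$ (p, j div dim_col D) * D $$ (q, j mod dim_col D)))"
    by (rule sum_div_mod'[where f = "\<lambda>p q. A $$ (i div dim_row B, p) * B $$ (i mod dim_row B, q) *
     (C $$ (p, j div dim_col D) * D $$ (q, j mod dim_col D))"])
  also have "\<dots> = (\<Sum>p<dim_col A. A $$ (i div dim_row B, p) * C $$ (p, j div dim_col D)) *
      (\<Sum>q<dim_col B. B $$ (i mod dim_row B, q) * D $$ (q, j mod dim_col D))"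
    by (simp add: sum_product mult_ac)
  also have "\<dots> = tensor (A * C) (B * D) $$ (i,j)"
    using ii i1 j1 assms by (subst tensor_index, simp, simp, subst mult_index, simp, simp, simp, subst mult_index, auto)
  finally show "(tensor A B * tensor C D) $$ (i,j) = tensor (A * C) (B * D) $$ (i,j)" .
qed (auto)


lemma tensor_one: "tensor (1\<^sub>m a) (1\<^sub>m b) = 1\<^sub>m (a*b)"
proof (rule eq_matI)
  fix i j assume ij: "i < dim_row (1\<^sub>m (a*b))" "j < dim_col (1\<^sub>m (a*b))"
  then have b: "i div b < a" "i mod b < b" "j div b < a" "j mod b < b"
    by (auto intro: div_less_mult mod_less_mult)
  have "(i div b = j div b \<and> i mod b = j mod b) = (i = j)"
    by (metis div_mult_mod_eq)
  then show "tensor (1\<^sub>m a) (1\<^sub>m b) $$ (i,j) = 1\<^sub>m (a*b) $$ (i,j)"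
    using ij b by (subst tensor_index, auto)
qed auto



lemma idx_lt: "a < dA \<Longrightarrow> b < (dB::nat) \<Longrightarrow> a*dB+b < dA*dB"
proof -
  assume "a < dA" "b < dB"
  then have "a*dB + b < a*dB + dB" by simp
  also have "\<dots> = Suc a * dB" by simp
  also have "\<dots> \<le> dA * dB" using \<open>a < dA\<close> by (intro mult_le_mono1, simp)
  finally show ?thesis .
qed

lemma tensor_index2: assumes "X \<in> carrier_mat dA dA'" "Y \<in> carrier_mat dB dB'"
  "a < dA" "p < dA'" "b < dB" "q < dB'"
  shows "tensor X Y $$ (a*dB+b, p*dB'+q) = X $$ (a,p) * Y $$ (b,q)"
  using assms by (subst tensor_index, auto intro: idx_lt)

lemma ptrace_dim[simp]: "dim_row (ptrace_B dA dB M) = dA" "dim_col (ptrace_B dA dB M) = dA"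
  by (auto simp: ptrace_B_def)

lemma ptrace_carrier[simp,intro]: "ptrace_B dA dB M \<in> carrier_mat dA dA"
  unfolding carrier_mat_def by simp

lemma ptrace_index: "a < dA \<Longrightarrow> a' < dA \<Longrightarrow>
   ptrace_B dA dB M $$ (a,a') = (\<Sum>b<dB. M $$ (a*dB+b, a'*dB+b))"
  by (simp add: ptrace_B_def)

lemma ptrace_left: assumes X: "X \<in> carrier_mat dA dA" and M: "M \<in> carrier_mat (dA*dB) (dA*dB)"
  shows "ptrace_B dA dB (tensor X (1\<^sub>m dB) * M) = X * ptrace_B dA dB M"
proof (rule eq_matI)
  fix a a' assume a: "a < dim_row (X * ptrace_B dA dB M)" "a' < dim_col (X * ptrace_B dA dB M)"
  then have a: "a < dA" "a' < dA" using X by auto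
  have "ptrace_B dA dB (tensor X (1\<^sub>m dB) * M) $$ (a,a') =
     (\<Sum>b<dB. \<Sum>k<dA*dB. tensor X (1\<^sub>m dB) $$ (a*dB+b, k) * M $$ (k, a'*dB+b))"
    using a X M by (subst ptrace_index, simp, simp, intro sum.cong refl, subst mult_index, auto intro: idx_lt)
  also have "\<dots> = (\<Sum>b<dB. \<Sum>p<dA. \<Sum>q<dB. tensor X (1\<^sub>m dB) $$ (a*dB+b, p*dB+q) * M $$ (p*dB+q, a'*dB+b))"
    by (subst sum_div_mod, simp)
  also have "\<dots> = (\<Sum>b<dB. \<Sum>p<dA. \<Sum>q<dB. (if q = b then X $$ (a,p) * M $$ (p*dB+q, a'*dB+b) else 0))"
    using a X by (intro sum.cong refl, subst tensor_index2[of _ dA dA _ dB dB], auto)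
  also have "\<dots> = (\<Sum>b<dB. \<Sum>p<dA. X $$ (a,p) * M $$ (p*dB+b, a'*dB+b))"
    by (rule sum.cong[OF refl], rule sum.cong[OF refl], simp)
  also have "\<dots> = (\<Sum>p<dA. X $$ (a,p) * (\<Sum>b<dB. M $$ (p*dB+b, a'*dB+b)))"
    by (subst sum.swap, simp add: sum_distrib_left)
  also have "\<dots> = (X * ptrace_B dA dB M) $$ (a,a')"
    using a X by (subst mult_index, auto simp: ptrace_index)
  finally show "ptrace_B dA dB (tensor X (1\<^sub>m dB) * M) $$ (a,a') = (X * ptrace_B dA dB M) $$ (a,a')" .
qed (use X in auto)

lemma ptrace_right: assumes X: "X \<in> carrier_mat dA dA" and M: "M \<in> carrier_mat (dA*dB) (dA*dB)"
  shows "ptrace_B dA dB (M * tensor X (1\<^sub>m dB)) = ptrace_B dA dB M * X"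
proof (rule eq_matI)
  fix a a' assume a: "a < dim_row (ptrace_B dA dB M * X)" "a' < dim_col (ptrace_B dA dB M * X)"
  then have a: "a < dA" "a' < dA" using X by auto
  have "ptrace_B dA dB (M * tensor X (1\<^sub>m dB)) $$ (a,a') =
     (\<Sum>b<dB. \<Sum>k<dA*dB. M $$ (a*dB+b, k) * tensor X (1\<^sub>m dB) $$ (k, a'*dB+b))"
    using a X M by (subst ptrace_index, simp, simp, intro sum.cong refl, subst mult_index, auto intro: idx_lt)
  also have "\<dots> = (\<Sum>b<dB. \<Sum>p<dA. \<Sum>q<dB. M $$ (a*dB+b, p*dB+q) * tensor X (1\<^sub>m dB) $$ (p*dB+q, a'*dB+b))"
    by (subst sum_div_mod, simp)
  also have "\<dots> = (\<Sum>b<dB. \<Sum>p<dA. \<Sum>q<dB. (if q = b then M $$ (a*dB+q, p*dB+b) * X $$ (p,a') else 0))"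
    using a X by (intro sum.cong refl, subst tensor_index2[of _ dA dA _ dB dB], auto)
  also have "\<dots> = (\<Sum>b<dB. \<Sum>p<dA. M $$ (a*dB+b, p*dB+b) * X $$ (p,a'))"
    by (rule sum.cong[OF refl], rule sum.cong[OF refl], simp)
  also have "\<dots> = (\<Sum>p<dA. (\<Sum>b<dB. M $$ (a*dB+b, p*dB+b)) * X $$ (p,a'))"
    by (subst sum.swap, simp add: sum_distrib_right)
  also have "\<dots> = (ptrace_B dA dB M * X) $$ (a,a')"
    using a X by (subst mult_index, auto simp: ptrace_index)
  finally show "ptrace_B dA dB (M * tensor X (1\<^sub>m dB)) $$ (a,a') = (ptrace_B dA dB M * X) $$ (a,a')" .
qed (use X in auto)

lemma ptrace_cyc: assumes S: "S \<in> carrier_mat dB dB" and M: "M \<in> carrier_mat (dA*dB) (dA*dB)"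
  shows "ptrace_B dA dB (tensor (1\<^sub>m dA) S * M) = ptrace_B dA dB (M * tensor (1\<^sub>m dA) S)"
proof (rule eq_matI)
  fix a a' assume a: "a < dim_row (ptrace_B dA dB (M * tensor (1\<^sub>m dA) S))" "a' < dim_col (ptrace_B dA dB (M * tensor (1\<^sub>m dA) S))"
  then have a: "a < dA" "a' < dA" by auto
  have "ptrace_B dA dB (tensor (1\<^sub>m dA) S * M) $$ (a,a') =
     (\<Sum>b<dB. \<Sum>k<dA*dB. tensor (1\<^sub>m dA) S $$ (a*dB+b, k) * M $$ (k, a'*dB+b))"
    using a S M by (subst ptrace_index, simp, simp, intro sum.cong refl, subst mult_index, auto intro: idx_lt)
  also have "\<dots> = (\<Sum>b<dB. \<Sum>p<dA. \<Sum>q<dB. tensor (1\<^sub>m dA) S $$ (a*dB+b, p*dB+q) * M $$ (p*dB+q, a'*dB+b))"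
    by (subst sum_div_mod, simp)
  also have "\<dots> = (\<Sum>b<dB. \<Sum>p<dA. \<Sum>q<dB. (if p = a then S $$ (b,q) * M $$ (p*dB+q, a'*dB+b) else 0))"
    using a S by (intro sum.cong refl, subst tensor_index2[of _ dA dA _ dB dB], auto)
  also have "\<dots> = (\<Sum>b<dB. \<Sum>q<dB. S $$ (b,q) * M $$ (a*dB+q, a'*dB+b))"
    by (rule sum.cong[OF refl], subst sum.swap, simp add: a)
  finally have L: "ptrace_B dA dB (tensor (1\<^sub>m dA) S * M) $$ (a,a') = (\<Sum>b<dB. \<Sum>q<dB. S $$ (b,q) * M $$ (a*dB+q, a'*dB+b))" .
  have "ptrace_B dA dB (M * tensor (1\<^sub>m dA) S) $$ (a,a') =
     (\<Sum>b<dB. \<Sum>k<dA*dB. M $$ (a*dB+b, k) * tensor (1\<^sub>m dA) S $$ (k, a'*dB+b))"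
    using a S M by (subst ptrace_index, simp, simp, intro sum.cong refl, subst mult_index, auto intro: idx_lt)
  also have "\<dots> = (\<Sum>b<dB. \<Sum>p<dA. \<Sum>q<dB. M $$ (a*dB+b, p*dB+q) * tensor (1\<^sub>m dA) S $$ (p*dB+q, a'*dB+b))"
    by (subst sum_div_mod, simp)
  also have "\<dots> = (\<Sum>b<dB. \<Sum>p<dA. \<Sum>q<dB. (if p = a' then M $$ (a*dB+b, p*dB+q) * S $$ (q,b) else 0))"
    using a S by (intro sum.cong refl, subst tensor_index2[of _ dA dA _ dB dB], auto)
  also have "\<dots> = (\<Sum>b<dB. \<Sum>q<dB. M $$ (a*dB+b, a'*dB+q) * S $$ (q,b))"
    by (rule sum.cong[OF refl], subst sum.swap, simp add: a)
  also have "\<dots> = (\<Sum>q<dB. \<Sum>b<dB. S $$ (q,b) * M $$ (a*dB+b, a'*dB+q))"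
    by (subst sum.swap, simp add: mult.commute)
  finally show "ptrace_B dA dB (tensor (1\<^sub>m dA) S * M) $$ (a,a') = ptrace_B dA dB (M * tensor (1\<^sub>m dA) S) $$ (a,a')"
    using L by simp
qed auto

lemma tr_ptrace: assumes M: "M \<in> carrier_mat (dA*dB) (dA*dB)"
  shows "tr (ptrace_B dA dB M) = tr M"
proof -
  have "tr (ptrace_B dA dB M) = (\<Sum>a<dA. \<Sum>b<dB. M $$ (a*dB+b, a*dB+b))"
    unfolding tr_def by (simp add: ptrace_index)
  also have "\<dots> = tr M" unfolding tr_def using M by (simp add: sum_div_mod)
  finally show ?thesis .
qed



lemma conj_cnj[simp]: "conjugate (z::complex) = cnj z"
  by (simp add: conjugate_complex_def)

lemma cdot_sum: "dim_vec w = dim_vec v \<Longrightarrow> v \<bullet>c w = (\<Sum>i<dim_vec v. v $ i * cnj (w $ i))"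
  by (simp add: scalar_prod_def conjugate_vec_def atLeast0LessThan)

lemma cdot_self_real: "v \<bullet>c v = complex_of_real (\<Sum>i<dim_vec v. (cmod (v $ i))^2)"
proof -
  have "v \<bullet>c v = (\<Sum>i<dim_vec v. v $ i * cnj (v $ i))" by (simp add: cdot_sum)
  also have "\<dots> = (\<Sum>i<dim_vec v. complex_of_real ((cmod (v $ i))^2))"
    by (intro sum.cong refl, simp add: complex_mult_cnj cmod_def)
  finally show ?thesis by simp
qed


lemma unitary_ext: fixes v :: "complex vec"
  assumes v: "v \<in> carrier_vec n" and v0: "v \<noteq> 0\<^sub>v n"
  shows "\<exists>U c. unitary n U \<and> col U 0 = c \<cdot>\<^sub>v v"
proof -
  interpret cof_vec_space n "TYPE(complex)" .
  define b where "b = basis_completion v"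
  define ws where "ws = gram_schmidt n b"
  from basis_completion[OF v v0, folded b_def]
  have dist_b: "distinct b" and indep: "\<not> lin_dep (set b)" and b: "set b \<subseteq> carrier_vec n"
    and hdb: "hd b = v" and len_b: "length b = n" by auto
  have n: "n > 0" using v v0 by (cases n, auto)
  from hdb len_b n obtain vs where bv: "b = v # vs" by (cases b, auto)
  from gram_schmidt_result[OF b dist_b indep refl, folded ws_def]
  have ws: "set ws \<subseteq> carrier_vec n" "corthogonal ws" "length ws = n" by (auto simp: len_b)
  from gram_schmidt_hd[OF v, of vs, folded bv] have hdws: "hd ws = v" unfolding ws_def .
  have ws0: "ws ! 0 = v" using hdws n ws(3) by (cases ws, auto)
  have wsc: "\<And>j. j < n \<Longrightarrow> ws ! j \<in> carrier_vec n" using ws by auto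
  define r where "r j = sqrt (\<Sum>i<n. (cmod (ws ! j $ i))^2)" for j
  have rr: "ws ! j \<bullet>c ws ! j = complex_of_real ((r j)^2)" if j: "j < n" for j
  proof -
    have s: "(r j)^2 = (\<Sum>i<n. (cmod (ws ! j $ i))^2)" unfolding r_def by (simp add: sum_nonneg)
    have d: "dim_vec (ws ! j) = n" using wsc[OF j] by simp
    show ?thesis using cdot_self_real[of "ws ! j"] by (simp only: d s)
  qed
  have rpos: "r j \<noteq> 0" if j: "j < n" for j
  proof
    assume "r j = 0"
    then have "ws ! j \<bullet>c ws ! j = 0" using rr[OF j] by simp
    then show False using corthogonalD[OF ws(2), of j j] ws(3) j by auto
  qed
  define U where "U = mat n n (\<lambda>(i,j). ws ! j $ i / complex_of_real (r j))"
  have Uc: "U \<in> carrier_mat n n" unfolding U_def by simp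
  have "dag U * U = 1\<^sub>m n"
  proof (rule eq_matI)
    fix i j assume ij: "i < dim_row (1\<^sub>m n)" "j < dim_col (1\<^sub>m n)"
    then have i: "i < n" and j: "j < n" by auto
    have "(dag U * U) $$ (i,j) = (\<Sum>k<n. cnj (ws ! i $ k / complex_of_real (r i)) * (ws ! j $ k / complex_of_real (r j)))"
      using i j Uc by (subst mult_index, auto simp: U_def)
    also have "\<dots> = (\<Sum>k<n. ws ! j $ k * cnj (ws ! i $ k)) / (complex_of_real (r i) * complex_of_real (r j))"
      by (simp add: sum_divide_distrib mult.commute)
    also have "(\<Sum>k<n. ws ! j $ k * cnj (ws ! i $ k)) = ws ! j \<bullet>c ws ! i"
      using wsc[OF i] wsc[OF j] by (simp add: cdot_sum)
    finally have e: "(dag U * U) $$ (i,j) = ws ! j \<bullet>c ws ! i / (complex_of_real (r i) * complex_of_real (r j))" .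
    show "(dag U * U) $$ (i,j) = 1\<^sub>m n $$ (i,j)"
    proof (cases "i = j")
      case True
      then show ?thesis using e rr[OF i] rpos[OF i] i by (simp add: power2_eq_square)
    next
      case False
      then have "ws ! j \<bullet>c ws ! i = 0" using corthogonalD[OF ws(2), of j i] ws(3) i j by auto
      then show ?thesis using e False i j by simp
    qed
  qed (use Uc in auto)
  moreover then have "U * dag U = 1\<^sub>m n"
    using mat_mult_left_right_inverse[of "dag U" n U] Uc by auto
  moreover have "col U 0 = (1 / complex_of_real (r 0)) \<cdot>\<^sub>v v"
    using n v ws0 by (intro eq_vecI, auto simp: U_def col_def)
  ultimately show ?thesis using Uc unfolding unitary_def by blast
qed

definition diag_c :: "nat \<Rightarrow> (nat \<Rightarrow> complex) \<Rightarrow> complex mat" where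
  "diag_c n f = mat n n (\<lambda>(i,j). if i = j then f i else 0)"

lemma diag_c_carrier[simp,intro]: "diag_c n f \<in> carrier_mat n n"
  unfolding diag_c_def carrier_mat_def by simp

lemma diag_c_dim[simp]: "dim_row (diag_c n f) = n" "dim_col (diag_c n f) = n"
  unfolding diag_c_def by simp_all

lemma diag_c_index: "i < n \<Longrightarrow> j < n \<Longrightarrow> diag_c n f $$ (i,j) = (if i = j then f i else 0)"
  unfolding diag_c_def by simp

definition ext :: "complex \<Rightarrow> complex mat \<Rightarrow> complex mat" where
  "ext c M = mat (Suc (dim_row M)) (Suc (dim_col M))
     (\<lambda>(i,j). if i = 0 \<and> j = 0 then c else if i = 0 \<or> j = 0 then 0 else M $$ (i - 1, j - 1))"

lemma ext_dim[simp]: "dim_row (ext c M) = Suc (dim_row M)" "dim_col (ext c M) = Suc (dim_col M)"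
  unfolding ext_def by simp_all

lemma ext_index: "i < Suc (dim_row M) \<Longrightarrow> j < Suc (dim_col M) \<Longrightarrow>
  ext c M $$ (i,j) = (if i = 0 \<and> j = 0 then c else if i = 0 \<or> j = 0 then 0 else M $$ (i - 1, j - 1))"
  unfolding ext_def by simp

lemma ext_mult: assumes "dim_col M = dim_row N"
  shows "ext c M * ext d N = ext (c*d) (M * N)"
proof (rule eq_matI)
  fix i j assume ij: "i < dim_row (ext (c*d) (M * N))" "j < dim_col (ext (c*d) (M * N))"
  then have i: "i < Suc (dim_row M)" and j: "j < Suc (dim_col N)" by auto
  have "(ext c M * ext d N) $$ (i,j) = (\<Sum>t<Suc (dim_col M). ext c M $$ (i,t) * ext d N $$ (t,j))"
    using i j assms by (subst mult_index, auto)
  also have "\<dots> = ext c M $$ (i,0) * ext d N $$ (0,j) + (\<Sum>t<dim_col M. ext c M $$ (i,Suc t) * ext d N $$ (Suc t,j))"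
    by (subst sum.lessThan_Suc_shift, simp)
  also have "\<dots> = ext (c*d) (M * N) $$ (i,j)"
  proof (cases "i = 0")
    case True
    then show ?thesis using i j assms by (auto simp: ext_index)
  next
    case False
    then obtain i' where i': "i = Suc i'" by (cases i, auto)
    show ?thesis
    proof (cases "j = 0")
      case True
      then show ?thesis using i j i' assms by (auto simp: ext_index)
    next
      case False
      then obtain j' where j': "j = Suc j'" by (cases j, auto)
      have r: "ext (c*d) (M*N) $$ (i,j) = (M*N) $$ (i',j')" using i j i' j' by (subst ext_index, auto)
      show ?thesis unfolding r using i j i' j' assms by (auto simp: ext_index mult_index simp del: index_mult_mat intro!: sum.cong)
    qed
  qed
  finally show "(ext c M * ext d N) $$ (i,j) = ext (c*d) (M * N) $$ (i,j)" .
qed auto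

lemma ext_dag: "dag (ext c M) = ext (cnj c) (dag M)"
  by (rule eq_matI, auto simp: ext_index)

lemma ext_one: "ext 1 (1\<^sub>m m) = 1\<^sub>m (Suc m)"
  by (rule eq_matI, auto simp: ext_index)

lemma ext_diag: "ext (complex_of_real r) (diag_c m (\<lambda>i. complex_of_real (d i))) =
   diag_c (Suc m) (\<lambda>i. complex_of_real (case i of 0 \<Rightarrow> r | Suc i' \<Rightarrow> d i'))"
  by (rule eq_matI, auto simp: ext_index diag_c_index split: nat.split)

lemma unitary_carrier: "unitary n U \<Longrightarrow> U \<in> carrier_mat n n"
  unfolding unitary_def by auto

lemma unitary_mult: assumes U: "unitary n U" and V: "unitary n V" shows "unitary n (U * V)"
proof -
  have Uc: "U \<in> carrier_mat n n" and Vc: "V \<in> carrier_mat n n" using U V unitary_carrier by auto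
  have d: "dag (U * V) = dag V * dag U" using Uc Vc by (intro dag_mult, auto)
  have "dag (U * V) * (U * V) = dag V * (dag U * (U * V))"
    unfolding d using Uc Vc by (intro assoc_mult_mat, auto)
  also have "dag U * (U * V) = (dag U * U) * V"
    using Uc Vc by (intro assoc_mult_mat[symmetric], auto)
  also have "\<dots> = V" using U Vc unfolding unitary_def by auto
  finally have 1: "dag (U * V) * (U * V) = 1\<^sub>m n" using V unfolding unitary_def by auto
  have "(U * V) * dag (U * V) = U * (V * (dag V * dag U))"
    unfolding d using Uc Vc by (intro assoc_mult_mat, auto)
  also have "V * (dag V * dag U) = (V * dag V) * dag U"
    using Uc Vc by (intro assoc_mult_mat[symmetric], auto)
  also have "\<dots> = dag U" using V Uc unfolding unitary_def by auto
  finally show ?thesis using 1 U Uc Vc unfolding unitary_def by auto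
qed

lemma ext_unitary: assumes "unitary m V" shows "unitary (Suc m) (ext 1 V)"
proof -
  have Vc: "V \<in> carrier_mat m m" using assms unitary_carrier by auto
  have c: "ext 1 V \<in> carrier_mat (Suc m) (Suc m)" using Vc by (intro carrier_matI, auto)
  have 1: "dag (ext 1 V) * ext 1 V = 1\<^sub>m (Suc m)"
    using assms Vc unfolding ext_dag unitary_def by (subst ext_mult, auto simp: ext_one)
  have 2: "ext 1 V * dag (ext 1 V) = 1\<^sub>m (Suc m)"
    using assms Vc unfolding ext_dag unitary_def by (subst ext_mult, auto simp: ext_one)
  show ?thesis unfolding unitary_def using c 1 2 by auto
qed



lemma mat0_eq: "A \<in> carrier_mat 0 0 \<Longrightarrow> B \<in> carrier_mat 0 0 \<Longrightarrow> A = B"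
  by (rule eq_matI, auto)

lemma unitary_sandwich: assumes U: "unitary n U" and A: "A \<in> carrier_mat n n"
  shows "U * (dag U * A * U) * dag U = A"
proof -
  have Uc: "U \<in> carrier_mat n n" using U unitary_carrier by auto
  have "U * (dag U * A * U) * dag U = (U * dag U) * A * (U * dag U)"
    using Uc A by (simp add: assoc_mult_mat[of _ n n _ n _ n] mult_carrier_mat[of _ n n _ n])
  also have "\<dots> = A" using U A unfolding unitary_def by auto
  finally show ?thesis .
qed

theorem spectral: "A \<in> carrier_mat n n \<Longrightarrow> dag A = A \<Longrightarrow>
  \<exists>U d. unitary n U \<and> A = U * diag_c n (\<lambda>i. complex_of_real (d i)) * dag U"
proof (induction n arbitrary: A)
  case 0
  show ?case
    by (rule exI[of _ "1\<^sub>m 0"], rule exI[of _ "\<lambda>_. 0"], 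
        auto simp: unitary_def intro!: mat0_eq[OF 0(1)])
next
  case (Suc m)
  note A = Suc.prems(1) and herm = Suc.prems(2)
  let ?n = "Suc m"
  from spectrum_non_empty[OF A] obtain lam where "eigenvalue A lam" unfolding spectrum_def by auto
  then obtain v where ev: "eigenvector A v lam" unfolding eigenvalue_def by auto
  then have v: "v \<in> carrier_vec ?n" "v \<noteq> 0\<^sub>v ?n" "A *\<^sub>v v = lam \<cdot>\<^sub>v v"
    unfolding eigenvector_def using A by auto
  from unitary_ext[OF v(1) v(2)] obtain U c where U: "unitary ?n U" and cU: "col U 0 = c \<cdot>\<^sub>v v" by auto
  have Uc: "U \<in> carrier_mat ?n ?n" using U unitary_carrier by auto
  have AU0: "(A * U) $$ (k,0) = lam * U $$ (k,0)" if k: "k < ?n" for k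
  proof -
    have "(A * U) $$ (k,0) = (A *\<^sub>v col U 0) $ k" using k A Uc by simp
    also have "A *\<^sub>v col U 0 = c \<cdot>\<^sub>v (A *\<^sub>v v)" unfolding cU using A v(1) by (simp add: mult_mat_vec)
    also have "\<dots> = lam \<cdot>\<^sub>v (c \<cdot>\<^sub>v v)" using v(3) by (simp add: smult_smult_assoc mult.commute)
    also have "\<dots> = lam \<cdot>\<^sub>v col U 0" unfolding cU ..
    finally show ?thesis using k Uc by simp
  qed
  define B where "B = dag U * A * U"
  have Bc: "B \<in> carrier_mat ?n ?n" unfolding B_def using A Uc by auto
  have B': "B = dag U * (A * U)" unfolding B_def using A Uc by (intro assoc_mult_mat, auto)
  have hB: "dag B = B" unfolding B_def using A Uc herm
    by (simp add: dag_mult assoc_mult_mat[of _ ?n ?n _ ?n _ ?n] mult_carrier_mat[of _ ?n ?n _ ?n])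
  have B0: "B $$ (i,0) = (if i = 0 then lam else 0)" if i: "i < ?n" for i
  proof -
    have "B $$ (i,0) = (\<Sum>k<?n. dag U $$ (i,k) * (A * U) $$ (k,0))"
      unfolding B' using i A Uc by (subst mult_index, auto)
    also have "\<dots> = (\<Sum>k<?n. lam * (dag U $$ (i,k) * U $$ (k,0)))"
      by (rule sum.cong[OF refl], simp add: AU0)
    also have "\<dots> = lam * (\<Sum>k<?n. dag U $$ (i,k) * U $$ (k,0))"
      by (rule sum_distrib_left[symmetric])
    also have "(\<Sum>k<?n. dag U $$ (i,k) * U $$ (k,0)) = (dag U * U) $$ (i,0)"
      using i Uc by (subst mult_index, auto)
    also have "\<dots> = (if i = 0 then 1 else 0)" using U i unfolding unitary_def by auto
    finally show ?thesis by simp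
  qed
  have lreal: "cnj lam = lam"
  proof -
    have "cnj (B $$ (0,0)) = dag B $$ (0,0)" using Bc by simp
    then show ?thesis using hB B0[of 0] by simp
  qed
  then have lam_r: "lam = complex_of_real (Re lam)" by (simp add: complex_eq_iff)
  have B0': "B $$ (0,j) = (if j = 0 then lam else 0)" if j: "j < ?n" for j
  proof -
    have "B $$ (0,j) = dag B $$ (0,j)" using hB by simp
    also have "\<dots> = cnj (B $$ (j,0))" using Bc j by simp
    finally show ?thesis using B0[OF j] lreal by auto
  qed
  define C where "C = mat m m (\<lambda>(i,j). B $$ (Suc i, Suc j))"
  have Cc: "C \<in> carrier_mat m m" unfolding C_def by simp
  have hC: "dag C = C"
  proof (rule eq_matI)
    fix i j assume ij: "i < dim_row C" "j < dim_col C"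
    then have "dag C $$ (i,j) = cnj (B $$ (Suc j, Suc i))" using Cc by (simp add: C_def)
    also have "\<dots> = dag B $$ (Suc i, Suc j)" using ij Bc Cc by simp
    also have "\<dots> = C $$ (i,j)" using hB ij Cc by (simp add: C_def)
    finally show "dag C $$ (i,j) = C $$ (i,j)" .
  qed (use Cc in auto)
  from Suc.IH[OF Cc hC] obtain V d where V: "unitary m V"
    and Cd: "C = V * diag_c m (\<lambda>i. complex_of_real (d i)) * dag V" by auto
  have Vc: "V \<in> carrier_mat m m" using V unitary_carrier by auto
  let ?D = "diag_c m (\<lambda>i. complex_of_real (d i))"
  have BC: "B = ext lam C"
  proof (rule eq_matI)
    fix i j assume ij: "i < dim_row (ext lam C)" "j < dim_col (ext lam C)"
    then have i: "i < ?n" and j: "j < ?n" using Cc by auto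
    show "B $$ (i,j) = ext lam C $$ (i,j)"
    proof (cases "i = 0 \<or> j = 0")
      case True
      then show ?thesis using B0 B0' i j Cc by (auto simp: ext_index)
    next
      case False
      then obtain i' j' where "i = Suc i'" "j = Suc j'" by (cases i; cases j, auto)
      then show ?thesis using i j Cc by (auto simp: ext_index C_def)
    qed
  qed (use Bc Cc in auto)
  have "ext lam C = ext 1 V * ext lam ?D * ext 1 (dag V)"
    unfolding Cd using Vc by (simp add: ext_mult)
  also have "ext lam ?D = diag_c ?n (\<lambda>i. complex_of_real (case i of 0 \<Rightarrow> Re lam | Suc i' \<Rightarrow> d i'))"
    by (subst lam_r, rule ext_diag)
  finally have Bform: "B = ext 1 V * diag_c ?n (\<lambda>i. complex_of_real (case i of 0 \<Rightarrow> Re lam | Suc i' \<Rightarrow> d i')) * dag (ext 1 V)"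
    unfolding BC ext_dag by simp
  define W where "W = ext 1 V"
  define E where "E = diag_c ?n (\<lambda>i. complex_of_real (case i of 0 \<Rightarrow> Re lam | Suc i' \<Rightarrow> d i'))"
  have W: "unitary ?n W" unfolding W_def using ext_unitary[OF V] .
  have Wc: "W \<in> carrier_mat ?n ?n" using W unitary_carrier by auto
  have Ec: "E \<in> carrier_mat ?n ?n" unfolding E_def by simp
  have "A = U * B * dag U" using unitary_sandwich[OF U A] unfolding B_def by simp
  also have "\<dots> = U * (W * E * dag W) * dag U" using Bform unfolding W_def E_def by simp
  also have "\<dots> = (U * W) * E * dag (U * W)"
    using Uc Wc Ec by (simp add: dag_mult assoc_mult_mat[of _ ?n ?n _ ?n _ ?n] mult_carrier_mat[of _ ?n ?n _ ?n])
  finally have "A = (U * W) * E * dag (U * W)" .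
  then show ?case using unitary_mult[OF U W] unfolding E_def by blast
qed



lemma mat_vec_index: "i < dim_row A \<Longrightarrow> dim_vec x = dim_col A \<Longrightarrow>
  (A *\<^sub>v x) $ i = (\<Sum>k<dim_col A. A $$ (i,k) * x $ k)"
  by (simp add: scalar_prod_def atLeast0LessThan)

lemma adj_lemma: assumes A: "A \<in> carrier_mat n m" and x: "x \<in> carrier_vec m" and y: "y \<in> carrier_vec n"
  shows "(A *\<^sub>v x) \<bullet>c y = x \<bullet>c (dag A *\<^sub>v y)"
proof -
  have dA: "dim_row A = n" "dim_col A = m" using A by auto
  have "(A *\<^sub>v x) \<bullet>c y = (\<Sum>i<n. (A *\<^sub>v x) $ i * cnj (y $ i))"
    using cdot_sum[of y "A *\<^sub>v x"] y dA by simp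
  also have "\<dots> = (\<Sum>i<n. (\<Sum>k<m. A $$ (i,k) * x $ k) * cnj (y $ i))"
    using x dA by (intro sum.cong refl, subst mat_vec_index, auto)
  also have "\<dots> = (\<Sum>k<m. \<Sum>i<n. x $ k * cnj (cnj (A $$ (i,k)) * y $ i))"
    by (simp add: sum_distrib_right, subst sum.swap, simp add: mult_ac)
  also have "\<dots> = (\<Sum>k<m. x $ k * cnj ((dag A *\<^sub>v y) $ k))"
    using y dA by (intro sum.cong refl, subst mat_vec_index, auto simp: sum_distrib_left)
  also have "\<dots> = x \<bullet>c (dag A *\<^sub>v y)"
    using cdot_sum[of "dag A *\<^sub>v y" x] x dA by simp
  finally show ?thesis .
qed

lemma ifz: "(if P then a else (0::complex)) * b = (if P then a*b else 0)"
  "b * (if P then a else (0::complex)) = (if P then b*a else 0)" by auto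

lemma diag_mult_left: "M \<in> carrier_mat n m \<Longrightarrow> i < n \<Longrightarrow> j < m \<Longrightarrow>
  (diag_c n f * M) $$ (i,j) = f i * M $$ (i,j)"
  by (subst mult_index, auto simp: diag_c_index ifz)

lemma diag_mult_right: "M \<in> carrier_mat m n \<Longrightarrow> i < m \<Longrightarrow> j < n \<Longrightarrow>
  (M * diag_c n f) $$ (i,j) = M $$ (i,j) * f j"
  by (subst mult_index, auto simp: diag_c_index ifz)

lemma psd_GDG: assumes G: "G \<in> carrier_mat n n" and d: "\<forall>i<n. d i \<ge> 0"
  shows "psd n (G * diag_c n (\<lambda>i. complex_of_real (d i)) * dag G)"
proof -
  let ?D = "diag_c n (\<lambda>i. complex_of_real (d i))"
  have Dc: "?D \<in> carrier_mat n n" by simp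
  have hD: "dag ?D = ?D" by (rule eq_matI, auto simp: diag_c_index)
  have c: "G * ?D * dag G \<in> carrier_mat n n" using G by auto
  have h: "dag (G * ?D * dag G) = G * ?D * dag G"
    using G by (simp add: dag_mult hD assoc_mult_mat[of _ n n _ n _ n] mult_carrier_mat[of _ n n _ n])
  have p: "0 \<le> Re (((G * ?D * dag G) *\<^sub>v v) \<bullet>c v)" if v: "v \<in> carrier_vec n" for v
  proof -
    define w where "w = dag G *\<^sub>v v"
    have w: "w \<in> carrier_vec n" unfolding w_def using G v by (intro mult_mat_vec_carrier, auto)
    have "(G * ?D * dag G) *\<^sub>v v = (G * ?D) *\<^sub>v w"
      unfolding w_def using G v by (intro assoc_mult_mat_vec[of _ n n _ n], auto)
    also have "\<dots> = G *\<^sub>v (?D *\<^sub>v w)"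
      using G w by (intro assoc_mult_mat_vec[of _ n n _ n], auto)
    finally have "(G * ?D * dag G) *\<^sub>v v = G *\<^sub>v (?D *\<^sub>v w)" .
    then have "((G * ?D * dag G) *\<^sub>v v) \<bullet>c v = (?D *\<^sub>v w) \<bullet>c w"
    proof -
      have Dw: "?D *\<^sub>v w \<in> carrier_vec n" using Dc w by (rule mult_mat_vec_carrier)
      show ?thesis using adj_lemma[OF G Dw v] \<open>(G * ?D * dag G) *\<^sub>v v = G *\<^sub>v (?D *\<^sub>v w)\<close> unfolding w_def by simp
    qed
    also have "\<dots> = (\<Sum>i<n. complex_of_real (d i * (cmod (w $ i))^2))"
    proof -
      have "(?D *\<^sub>v w) \<bullet>c w = (\<Sum>i<n. (?D *\<^sub>v w) $ i * cnj (w $ i))" using w by (subst cdot_sum, auto)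
      also have "\<dots> = (\<Sum>i<n. complex_of_real (d i) * w $ i * cnj (w $ i))"
        using w by (intro sum.cong refl, subst mat_vec_index, auto simp: diag_c_index ifz)
      also have "\<dots> = (\<Sum>i<n. complex_of_real (d i * (cmod (w $ i))^2))"
        by (intro sum.cong refl, simp add: mult.assoc complex_mult_cnj cmod_def)
      finally show ?thesis .
    qed
    finally have "Re (((G * ?D * dag G) *\<^sub>v v) \<bullet>c v) = (\<Sum>i<n. d i * (cmod (w $ i))^2)"
      by simp
    also have "\<dots> \<ge> 0" using d by (intro sum_nonneg, auto)
    finally show ?thesis .
  qed
  show ?thesis unfolding psd_def using c h p by auto
qed

lemma diag_entry_form: assumes V: "V \<in> carrier_mat n n" and A: "A \<in> carrier_mat n n" and i: "i < n"
  shows "(dag V * A * V) $$ (i,i) = (A *\<^sub>v col V i) \<bullet>c col V i"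
proof -
  have dV: "dim_row V = n" "dim_col V = n" "dim_row A = n" "dim_col A = n" using V A by auto
  have "(dag V * A * V) $$ (i,i) = (\<Sum>l<n. (dag V * A) $$ (i,l) * V $$ (l,i))"
    using dV i by (subst mult_index, auto)
  also have "\<dots> = (\<Sum>l<n. (\<Sum>k<n. cnj (V $$ (k,i)) * A $$ (k,l)) * V $$ (l,i))"
    using dV i by (intro sum.cong refl, subst mult_index, auto)
  also have "\<dots> = (\<Sum>k<n. (\<Sum>l<n. A $$ (k,l) * V $$ (l,i)) * cnj (V $$ (k,i)))"
    by (simp add: sum_distrib_left sum_distrib_right, subst sum.swap, simp add: mult_ac)
  also have "\<dots> = (\<Sum>k<n. (A *\<^sub>v col V i) $ k * cnj (col V i $ k))"
    using dV i by (intro sum.cong refl, subst mat_vec_index, auto)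
  also have "\<dots> = (A *\<^sub>v col V i) \<bullet>c col V i"
    using cdot_sum[of "col V i" "A *\<^sub>v col V i"] dV by simp
  finally show ?thesis .
qed

lemma unitary_inner: assumes U: "unitary n U" and D: "D \<in> carrier_mat n n"
  shows "dag U * (U * D * dag U) * U = D"
proof -
  have Uc: "U \<in> carrier_mat n n" using U unitary_carrier by auto
  have "dag U * (U * D * dag U) * U = (dag U * U) * D * (dag U * U)"
    using Uc D by (simp add: assoc_mult_mat[of _ n n _ n _ n] mult_carrier_mat[of _ n n _ n])
  also have "\<dots> = D" using U D unfolding unitary_def by auto
  finally show ?thesis .
qed

lemma spectral_psd: assumes "psd n A"
  shows "\<exists>U d. unitary n U \<and> (\<forall>i<n. d i \<ge> 0) \<and> A = U * diag_c n (\<lambda>i. complex_of_real (d i)) * dag U"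
proof -
  have A: "A \<in> carrier_mat n n" and h: "dag A = A" using assms unfolding psd_def by auto
  from spectral[OF A h] obtain U d where U: "unitary n U"
    and Ad: "A = U * diag_c n (\<lambda>i. complex_of_real (d i)) * dag U" by auto
  have Uc: "U \<in> carrier_mat n n" using U unitary_carrier by auto
  have "d i \<ge> 0" if i: "i < n" for i
  proof -
    have "complex_of_real (d i) = (dag U * A * U) $$ (i,i)"
      using unitary_inner[OF U, of "diag_c n (\<lambda>i. complex_of_real (d i))"] i Ad by (simp add: diag_c_index)
    also have "\<dots> = (A *\<^sub>v col U i) \<bullet>c col U i" using diag_entry_form[OF Uc A i] .
    finally have "d i = Re ((A *\<^sub>v col U i) \<bullet>c col U i)" by (metis Re_complex_of_real)
    also have "\<dots> \<ge> 0" using assms Uc i unfolding psd_def by auto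
    finally show ?thesis .
  qed
  then show ?thesis using U Ad by blast
qed

lemma diag_mult: "diag_c n f * diag_c n g = diag_c n (\<lambda>i. f i * g i)"
proof (rule eq_matI)
  fix i j assume "i < dim_row (diag_c n (\<lambda>i. f i * g i))" "j < dim_col (diag_c n (\<lambda>i. f i * g i))"
  then show "(diag_c n f * diag_c n g) $$ (i,j) = diag_c n (\<lambda>i. f i * g i) $$ (i,j)"
    by (subst diag_mult_left[of _ n n], auto simp: diag_c_index)
qed auto

lemma sqrt_exists: assumes "psd n A" shows "\<exists>B. psd n B \<and> B * B = A"
proof -
  from spectral_psd[OF assms] obtain U d where U: "unitary n U" and d: "\<forall>i<n. d i \<ge> 0"
    and Ad: "A = U * diag_c n (\<lambda>i. complex_of_real (d i)) * dag U" by auto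
  have Uc: "U \<in> carrier_mat n n" using U unitary_carrier by auto
  define S where "S = diag_c n (\<lambda>i. complex_of_real (sqrt (d i)))"
  have Sc: "S \<in> carrier_mat n n" unfolding S_def by simp
  define B where "B = U * S * dag U"
  have "psd n B" unfolding B_def S_def using Uc d by (intro psd_GDG, auto)
  moreover have "B * B = U * (S * S) * dag U"
  proof -
    have "B * B = U * S * (dag U * U) * S * dag U"
      unfolding B_def using Uc Sc by (simp add: assoc_mult_mat[of _ n n _ n _ n] mult_carrier_mat[of _ n n _ n])
    also have "\<dots> = U * (S * S) * dag U"
      using U Uc Sc unfolding unitary_def by (simp add: assoc_mult_mat[of _ n n _ n _ n] mult_carrier_mat[of _ n n _ n])
    finally show ?thesis .
  qed
  moreover have "S * S = diag_c n (\<lambda>i. complex_of_real (d i))"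
    unfolding S_def diag_mult
    by (rule eq_matI, auto simp: diag_c_index d simp flip: of_real_mult)
  ultimately show ?thesis using Ad by auto
qed



lemma sq_form: assumes U: "unitary n U" and S: "S \<in> carrier_mat n n"
  shows "(U * S * dag U) * (U * S * dag U) = U * (S * S) * dag U"
proof -
  have Uc: "U \<in> carrier_mat n n" using U unitary_carrier by auto
  have "(U * S * dag U) * (U * S * dag U) = U * S * (dag U * U) * S * dag U"
    using Uc S by (simp add: assoc_mult_mat[of _ n n _ n _ n] mult_carrier_mat[of _ n n _ n])
  also have "\<dots> = U * (S * S) * dag U"
    using U Uc S unfolding unitary_def by (simp add: assoc_mult_mat[of _ n n _ n _ n] mult_carrier_mat[of _ n n _ n])
  finally show ?thesis .
qed

lemma sqrt_unique: assumes B: "psd n B" and C: "psd n C" and BC: "B * B = C * C"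
  shows "B = C"
proof -
  from spectral_psd[OF B] obtain U s where U: "unitary n U" and s: "\<forall>i<n. s i \<ge> 0"
    and Bs: "B = U * diag_c n (\<lambda>i. complex_of_real (s i)) * dag U" by auto
  from spectral_psd[OF C] obtain V e where V: "unitary n V" and e: "\<forall>i<n. e i \<ge> 0"
    and Ce: "C = V * diag_c n (\<lambda>i. complex_of_real (e i)) * dag V" by auto
  define S where "S = diag_c n (\<lambda>i. complex_of_real (s i))"
  define E where "E = diag_c n (\<lambda>i. complex_of_real (e i))"
  have Uc: "U \<in> carrier_mat n n" using U unitary_carrier by auto
  have Vc: "V \<in> carrier_mat n n" using V unitary_carrier by auto
  have Sc: "S \<in> carrier_mat n n" and Ec: "E \<in> carrier_mat n n" unfolding S_def E_def by auto
  define G where "G = dag U * V"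
  have Gc: "G \<in> carrier_mat n n" unfolding G_def using Uc Vc by auto
  have eq: "U * (S * S) * dag U = V * (E * E) * dag V"
    using BC Bs Ce sq_form[OF U Sc] sq_form[OF V Ec] unfolding S_def E_def by simp
  have "dag U * (U * (S * S) * dag U) * V = (dag U * U) * (S * S) * (dag U * V)"
    using Uc Vc Sc by (simp add: assoc_mult_mat[of _ n n _ n _ n] mult_carrier_mat[of _ n n _ n])
  also have "\<dots> = (S * S) * G" using U Sc unfolding unitary_def G_def by simp
  finally have L: "dag U * (U * (S * S) * dag U) * V = (S * S) * G" .
  have "dag U * (V * (E * E) * dag V) * V = (dag U * V) * (E * E) * (dag V * V)"
    using Uc Vc Ec by (simp add: assoc_mult_mat[of _ n n _ n _ n] mult_carrier_mat[of _ n n _ n])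
  also have "\<dots> = G * (E * E)" using V Ec Gc unfolding unitary_def G_def by simp
  finally have R: "dag U * (V * (E * E) * dag V) * V = G * (E * E)" .
  have SSG: "(S * S) * G = G * (E * E)" using L R eq by simp
  have SG: "S * G = G * E"
  proof (rule eq_matI)
    fix i j assume ij: "i < dim_row (G * E)" "j < dim_col (G * E)"
    then have i: "i < n" and j: "j < n" using Gc Ec by auto
    have "((S * S) * G) $$ (i,j) = (G * (E * E)) $$ (i,j)" using SSG by simp
    moreover have "((S * S) * G) $$ (i,j) = complex_of_real (s i * s i) * G $$ (i,j)"
      unfolding S_def diag_mult using Gc i j by (subst diag_mult_left[of _ n n], auto)
    moreover have "(G * (E * E)) $$ (i,j) = G $$ (i,j) * complex_of_real (e j * e j)"
      unfolding E_def diag_mult using Gc i j by (subst diag_mult_right[of _ n n], auto)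
    ultimately have "complex_of_real (s i * s i) * G $$ (i,j) = G $$ (i,j) * complex_of_real (e j * e j)"
      by simp
    then have "G $$ (i,j) = 0 \<or> s i * s i = e j * e j"
      by (metis mult.commute mult_cancel_left of_real_eq_iff)
    then have "G $$ (i,j) = 0 \<or> s i = e j"
    proof -
      have "s i = e j" if h: "s i * s i = e j * e j"
      proof -
        have "s i = sqrt (s i * s i)" using s i by simp
        also have "\<dots> = sqrt (e j * e j)" using h by simp
        also have "\<dots> = e j" using e j by simp
        finally show ?thesis .
      qed
      then show ?thesis using \<open>G $$ (i,j) = 0 \<or> s i * s i = e j * e j\<close> by blast
    qed
    then have "complex_of_real (s i) * G $$ (i,j) = G $$ (i,j) * complex_of_real (e j)"
      by auto
    moreover have "(S * G) $$ (i,j) = complex_of_real (s i) * G $$ (i,j)"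
      unfolding S_def using Gc i j by (subst diag_mult_left[of _ n n], auto)
    moreover have "(G * E) $$ (i,j) = G $$ (i,j) * complex_of_real (e j)"
      unfolding E_def using Gc i j by (subst diag_mult_right[of _ n n], auto)
    ultimately show "(S * G) $$ (i,j) = (G * E) $$ (i,j)" by simp
  qed (use Gc Sc Ec in auto)
  have "B = U * S * dag U * (V * dag V)"
    using Bs V Uc Sc unfolding S_def unitary_def by simp
  also have "\<dots> = U * (S * G) * dag V"
    unfolding G_def using Uc Vc Sc by (simp add: assoc_mult_mat[of _ n n _ n _ n] mult_carrier_mat[of _ n n _ n])
  also have "\<dots> = U * (G * E) * dag V" unfolding SG ..
  also have "\<dots> = (U * dag U) * V * E * dag V"
    unfolding G_def using Uc Vc Ec by (simp add: assoc_mult_mat[of _ n n _ n _ n] mult_carrier_mat[of _ n n _ n])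
  also have "\<dots> = C" using U Ce Vc unfolding unitary_def E_def by simp
  finally show ?thesis .
qed

lemma psd_dim: "psd n A \<Longrightarrow> dim_row A = n"
  unfolding psd_def by auto

lemma msqrt_char: assumes "psd n A" shows "psd n (msqrt A) \<and> msqrt A * msqrt A = A"
proof -
  have "\<exists>!B. psd (dim_row A) B \<and> B * B = A"
    using sqrt_exists[OF assms] sqrt_unique psd_dim[OF assms] by metis
  from theI'[OF this] show ?thesis unfolding msqrt_def using psd_dim[OF assms] by simp
qed

lemma msqrt_eq: assumes "psd n A" "psd n B" "B * B = A" shows "msqrt A = B"
  using msqrt_char[OF assms(1)] sqrt_unique[OF assms(2)] assms(3) by metis



lemma ifc: "cnj (if P then a else 0) = (if P then cnj a else 0)" by auto

lemma ptrace_psd: assumes M: "psd (dA*dB) M" shows "psd dA (ptrace_B dA dB M)"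
proof -
  have Mc: "M \<in> carrier_mat (dA*dB) (dA*dB)" and hM: "dag M = M" using M unfolding psd_def by auto
  have h: "dag (ptrace_B dA dB M) = ptrace_B dA dB M"
  proof (rule eq_matI)
    fix a a' assume "a < dim_row (ptrace_B dA dB M)" "a' < dim_col (ptrace_B dA dB M)"
    then have a: "a < dA" "a' < dA" by auto
    have "dag (ptrace_B dA dB M) $$ (a,a') = cnj (\<Sum>b<dB. M $$ (a'*dB+b, a*dB+b))"
      using a by (simp add: ptrace_index)
    also have "\<dots> = (\<Sum>b<dB. dag M $$ (a*dB+b, a'*dB+b))"
    proof -
      have dM: "dim_row M = dA*dB" "dim_col M = dA*dB" using Mc by auto
      show ?thesis using a by (subst cnj_sum, intro sum.cong refl, subst dag_index, auto simp: dM intro: idx_lt)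
    qed
    also have "\<dots> = ptrace_B dA dB M $$ (a,a')" using a hM by (simp add: ptrace_index)
    finally show "dag (ptrace_B dA dB M) $$ (a,a') = ptrace_B dA dB M $$ (a,a')" .
  qed auto
  have p: "0 \<le> Re ((ptrace_B dA dB M *\<^sub>v v) \<bullet>c v)" if v: "v \<in> carrier_vec dA" for v
  proof -
    define w where "w b = vec (dA*dB) (\<lambda>k. if k mod dB = b then v $ (k div dB) else 0)" for b
    have wc: "w b \<in> carrier_vec (dA*dB)" for b unfolding w_def by simp
    have wi: "w b $ (p*dB+q) = (if q = b then v $ p else 0)" if "p < dA" "q < dB" for b p q
      using that unfolding w_def by (simp add: idx_lt)
    have R: "(M *\<^sub>v w b) \<bullet>c w b = (\<Sum>p<dA. (\<Sum>p'<dA. M $$ (p*dB+b, p'*dB+b) * v $ p') * cnj (v $ p))"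
      if b: "b < dB" for b
    proof -
      have "(M *\<^sub>v w b) \<bullet>c w b = (\<Sum>k<dA*dB. (M *\<^sub>v w b) $ k * cnj (w b $ k))"
        using cdot_sum[of "w b" "M *\<^sub>v w b"] Mc wc by simp
      also have "\<dots> = (\<Sum>p<dA. \<Sum>q<dB. (M *\<^sub>v w b) $ (p*dB+q) * cnj (w b $ (p*dB+q)))"
        by (rule sum_div_mod)
      also have "\<dots> = (\<Sum>p<dA. (M *\<^sub>v w b) $ (p*dB+b) * cnj (v $ p))"
        using b by (intro sum.cong refl, simp add: wi ifz ifc)
      also have "\<dots> = (\<Sum>p<dA. (\<Sum>p'<dA. M $$ (p*dB+b, p'*dB+b) * v $ p') * cnj (v $ p))"
      proof (rule sum.cong[OF refl])
        fix p assume p: "p \<in> {..<dA}"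
        have "(M *\<^sub>v w b) $ (p*dB+b) = (\<Sum>k<dA*dB. M $$ (p*dB+b, k) * w b $ k)"
          using Mc wc p b by (subst mat_vec_index, auto intro: idx_lt)
        also have "\<dots> = (\<Sum>p'<dA. \<Sum>q<dB. M $$ (p*dB+b, p'*dB+q) * w b $ (p'*dB+q))"
          by (rule sum_div_mod)
        also have "\<dots> = (\<Sum>p'<dA. M $$ (p*dB+b, p'*dB+b) * v $ p')"
          using b by (intro sum.cong refl, simp add: wi ifz)
        finally show "(M *\<^sub>v w b) $ (p*dB+b) * cnj (v $ p) = (\<Sum>p'<dA. M $$ (p*dB+b, p'*dB+b) * v $ p') * cnj (v $ p)"
          by simp
      qed
      finally show ?thesis .
    qed
    have "(ptrace_B dA dB M *\<^sub>v v) \<bullet>c v = (\<Sum>a<dA. (ptrace_B dA dB M *\<^sub>v v) $ a * cnj (v $ a))"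
      using cdot_sum[of v "ptrace_B dA dB M *\<^sub>v v"] v by simp
    also have "\<dots> = (\<Sum>a<dA. (\<Sum>a'<dA. (\<Sum>b<dB. M $$ (a*dB+b, a'*dB+b)) * v $ a') * cnj (v $ a))"
      using v by (intro sum.cong refl, subst mat_vec_index, auto simp: ptrace_index)
    also have "\<dots> = (\<Sum>b<dB. \<Sum>a<dA. (\<Sum>a'<dA. M $$ (a*dB+b, a'*dB+b) * v $ a') * cnj (v $ a))"
      by (simp add: sum_distrib_right, subst (2) sum.swap, subst sum.swap, simp)
    also have "\<dots> = (\<Sum>b<dB. (M *\<^sub>v w b) \<bullet>c w b)"
      using R by simp
    finally have "Re ((ptrace_B dA dB M *\<^sub>v v) \<bullet>c v) = (\<Sum>b<dB. Re ((M *\<^sub>v w b) \<bullet>c w b))"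
      by simp
    also have "\<dots> \<ge> 0" using M wc unfolding psd_def by (intro sum_nonneg, auto)
    finally show ?thesis .
  qed
  show ?thesis unfolding psd_def using h p by auto
qed



lemma tensor_diag: "tensor (diag_c a f) (diag_c b g) = diag_c (a*b) (\<lambda>k. f (k div b) * g (k mod b))"
proof (rule eq_matI)
  fix i j assume ij: "i < dim_row (diag_c (a*b) (\<lambda>k. f (k div b) * g (k mod b)))"
    "j < dim_col (diag_c (a*b) (\<lambda>k. f (k div b) * g (k mod b)))"
  then have i: "i < a*b" and j: "j < a*b" by auto
  then have bb: "i div b < a" "i mod b < b" "j div b < a" "j mod b < b"
    by (auto intro: div_less_mult mod_less_mult)
  have e: "(i div b = j div b \<and> i mod b = j mod b) = (i = j)"
    by (metis div_mult_mod_eq)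
  show "tensor (diag_c a f) (diag_c b g) $$ (i,j) = diag_c (a*b) (\<lambda>k. f (k div b) * g (k mod b)) $$ (i,j)"
    using i j bb e by (subst tensor_index, auto simp: diag_c_index)
qed auto

lemma psd_tensor_conj: assumes P: "psd dA P" and Q: "psd dB Q" and U: "U \<in> carrier_mat (dA*dB) (dA*dB)"
  shows "psd (dA*dB) (U * tensor P Q * dag U)"
proof -
  from spectral_psd[OF P] obtain Wa da where Wa: "unitary dA Wa" and da: "\<forall>i<dA. da i \<ge> 0"
    and Pd: "P = Wa * diag_c dA (\<lambda>i. complex_of_real (da i)) * dag Wa" by auto
  from spectral_psd[OF Q] obtain Wb db where Wb: "unitary dB Wb" and db: "\<forall>i<dB. db i \<ge> 0"
    and Qd: "Q = Wb * diag_c dB (\<lambda>i. complex_of_real (db i)) * dag Wb" by auto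
  have Wac: "Wa \<in> carrier_mat dA dA" and Wbc: "Wb \<in> carrier_mat dB dB" using Wa Wb unitary_carrier by auto
  let ?Da = "diag_c dA (\<lambda>i. complex_of_real (da i))"
  let ?Db = "diag_c dB (\<lambda>i. complex_of_real (db i))"
  define d where "d k = da (k div dB) * db (k mod dB)" for k
  have D: "tensor ?Da ?Db = diag_c (dA*dB) (\<lambda>k. complex_of_real (d k))"
    unfolding tensor_diag d_def by simp
  have "tensor P Q = tensor (Wa * ?Da) (Wb * ?Db) * tensor (dag Wa) (dag Wb)"
    unfolding Pd Qd using Wac Wbc by (subst tensor_mult, auto)
  also have "tensor (Wa * ?Da) (Wb * ?Db) = tensor Wa Wb * tensor ?Da ?Db"
    using Wac Wbc by (subst tensor_mult, auto)
  finally have TPQ: "tensor P Q = tensor Wa Wb * diag_c (dA*dB) (\<lambda>k. complex_of_real (d k)) * dag (tensor Wa Wb)"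
    unfolding D dag_tensor .
  define G where "G = U * tensor Wa Wb"
  have Tc: "tensor Wa Wb \<in> carrier_mat (dA*dB) (dA*dB)" using Wac Wbc by auto
  have Gc: "G \<in> carrier_mat (dA*dB) (dA*dB)" unfolding G_def using U Tc by auto
  let ?n = "dA*dB"
  have "U * tensor P Q * dag U = G * diag_c ?n (\<lambda>k. complex_of_real (d k)) * dag G"
  proof -
    have "dim_col U = dA*dB" "dim_row (tensor Wa Wb) = dA*dB" using U Tc by auto
    then have dG: "dag (U * tensor Wa Wb) = dag (tensor Wa Wb) * dag U" by (intro dag_mult, simp)
    show ?thesis unfolding TPQ G_def dG using U Tc
    by (simp add: assoc_mult_mat[of _ ?n ?n _ ?n _ ?n] mult_carrier_mat[of _ ?n ?n _ ?n])
  qed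
  moreover have "\<forall>k<?n. d k \<ge> 0"
  proof (intro allI impI)
    fix k assume k: "k < ?n"
    then show "d k \<ge> 0" unfolding d_def using da db div_less_mult[OF k] mod_less_mult[OF k] by auto
  qed
  ultimately show ?thesis using psd_GDG[OF Gc] by simp
qed

lemma psd_sq: assumes R: "psd n R" shows "psd n (R * R)"
proof -
  from spectral_psd[OF R] obtain W d where W: "unitary n W" and d: "\<forall>i<n. d i \<ge> 0"
    and Rd: "R = W * diag_c n (\<lambda>i. complex_of_real (d i)) * dag W" by auto
  have Wc: "W \<in> carrier_mat n n" using W unitary_carrier by auto
  have "R * R = W * diag_c n (\<lambda>i. complex_of_real (d i * d i)) * dag W"
    unfolding Rd sq_form[OF W diag_c_carrier] diag_mult by simp
  then show ?thesis using psd_GDG[OF Wc, of "\<lambda>i. d i * d i"] d by auto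
qed

lemma minv_sqrt: assumes T: "T \<in> carrier_mat n n" and TT: "T * T = A" and inv: "invertible_mat A"
  shows "minv T \<in> carrier_mat n n"
proof -
  have Ac: "A \<in> carrier_mat n n" using T TT by auto
  from inv obtain B where AB: "A * B = 1\<^sub>m (dim_row A)" and BA: "B * A = 1\<^sub>m (dim_row B)"
    unfolding invertible_mat_def inverts_mat_def by auto
  have "dim_col B = n" using arg_cong[OF AB, of dim_col] Ac by simp
  moreover have "dim_row B = n" using arg_cong[OF BA, of dim_col] Ac by simp
  ultimately have Bc: "B \<in> carrier_mat n n" by auto
  have AB': "A * B = 1\<^sub>m n" and BA': "B * A = 1\<^sub>m n" using AB BA Ac Bc by auto
  define Ri where "Ri = T * B"
  have Ric: "Ri \<in> carrier_mat n n" unfolding Ri_def using T Bc by auto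
  have TR: "T * Ri = 1\<^sub>m n" unfolding Ri_def using T Bc AB' TT by (simp add: assoc_mult_mat[symmetric, of _ n n _ n _ n])
  have LT: "(B * T) * T = 1\<^sub>m n" using T Bc BA' TT by (simp add: assoc_mult_mat[of _ n n _ n _ n])
  have RT: "Ri * T = 1\<^sub>m n"
  proof -
    have "Ri = ((B * T) * T) * Ri" using LT Ric by simp
    also have "\<dots> = (B * T) * (T * Ri)" using Bc T Ric by (simp add: assoc_mult_mat[of _ n n _ n _ n])
    also have "\<dots> = B * T" using TR Bc T by simp
    finally have "Ri = B * T" .
    then show ?thesis using LT by simp
  qed
  have "minv T = Ri" unfolding minv_def
  proof (rule the_equality)
    show "Ri \<in> carrier_mat (dim_row T) (dim_row T) \<and> T * Ri = 1\<^sub>m (dim_row T) \<and> Ri * T = 1\<^sub>m (dim_row T)"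
      using Ric TR RT T by auto
  next
    fix C assume C: "C \<in> carrier_mat (dim_row T) (dim_row T) \<and> T * C = 1\<^sub>m (dim_row T) \<and> C * T = 1\<^sub>m (dim_row T)"
    then have Cc: "C \<in> carrier_mat n n" and CT: "C * T = 1\<^sub>m n" using T by auto
    have "C = C * (T * Ri)" using TR Cc by simp
    also have "\<dots> = (C * T) * Ri" using Cc T Ric by (simp add: assoc_mult_mat[of _ n n _ n _ n])
    also have "\<dots> = Ri" using CT Ric by simp
    finally show "C = Ri" .
  qed
  then show ?thesis using Ric by simp
qed

definition Eu :: "nat \<Rightarrow> nat \<Rightarrow> nat \<Rightarrow> complex mat" where
  "Eu m j i = mat m m (\<lambda>(a,b). if a = j \<and> b = i then 1 else 0)"

lemma tr_unit: assumes Z: "Z \<in> carrier_mat m m" and i: "i < m" and j: "j < m"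
  shows "tr (Eu m j i * Z) = Z $$ (i,j)"
proof -
  have "tr (Eu m j i * Z) = (\<Sum>a<m. \<Sum>b<m. (if a = j \<and> b = i then 1 else 0) * Z $$ (b,a))"
    unfolding tr_def using Z by (auto simp: Eu_def mult_index simp del: index_mult_mat(1) intro!: sum.cong)
  also have "\<dots> = (\<Sum>a<m. if a = j then Z $$ (i,a) else 0)"
  proof (rule sum.cong[OF refl])
    fix a assume "a \<in> {..<m}"
    show "(\<Sum>b<m. (if a = j \<and> b = i then 1 else 0) * Z $$ (b,a)) = (if a = j then Z $$ (i,a) else 0)"
      using i by (cases "a = j", auto simp: ifz)
  qed
  also have "\<dots> = Z $$ (i,j)" using j by simp
  finally show ?thesis .
qed

lemma hs_adj_eq: assumes F1: "\<forall>Y \<in> carrier_mat m m. F Y \<in> carrier_mat m m \<and>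
        (\<forall>X \<in> carrier_mat m m. tr (E X * Y) = tr (X * F Y))"
   and F2: "\<forall>Y. Y \<notin> carrier_mat m m \<longrightarrow> F Y = 0\<^sub>m m m"
  shows "hs_adjoint m m E = F"
  unfolding hs_adjoint_def
proof (rule the_equality)
  show "(\<forall>Y \<in> carrier_mat m m. F Y \<in> carrier_mat m m \<and>
        (\<forall>X \<in> carrier_mat m m. tr (E X * Y) = tr (X * F Y))) \<and>
     (\<forall>Y. Y \<notin> carrier_mat m m \<longrightarrow> F Y = 0\<^sub>m m m)" using F1 F2 by blast
next
  fix G assume G: "(\<forall>Y \<in> carrier_mat m m. G Y \<in> carrier_mat m m \<and>
        (\<forall>X \<in> carrier_mat m m. tr (E X * Y) = tr (X * G Y))) \<and>
     (\<forall>Y. Y \<notin> carrier_mat m m \<longrightarrow> G Y = 0\<^sub>m m m)"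
  show "G = F"
  proof
    fix Y show "G Y = F Y"
    proof (cases "Y \<in> carrier_mat m m")
      case True
      have Gc: "G Y \<in> carrier_mat m m" and Fc: "F Y \<in> carrier_mat m m" using G F1 True by auto
      have eq: "tr (X * G Y) = tr (X * F Y)" if "X \<in> carrier_mat m m" for X
        using G F1 True that by metis
      show ?thesis
      proof (rule eq_matI)
        fix i j assume "i < dim_row (F Y)" "j < dim_col (F Y)"
        then have i: "i < m" and j: "j < m" using Fc by auto
        have "G Y $$ (i,j) = tr (Eu m j i * G Y)" using tr_unit[OF Gc i j] by simp
        also have "\<dots> = tr (Eu m j i * F Y)" by (rule eq, simp add: Eu_def)
        also have "\<dots> = F Y $$ (i,j)" using tr_unit[OF Fc i j] .
        finally show "G Y $$ (i,j) = F Y $$ (i,j)" .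
      qed (use Gc Fc in auto)
    next
      case False
      then show ?thesis using G F2 by auto
    qed
  qed
qed



lemma channel_adj: assumes U: "U \<in> carrier_mat (dA*dB) (dA*dB)" and B: "\<beta> \<in> carrier_mat dB dB"
  and X: "X \<in> carrier_mat dA dA" and Y: "Y \<in> carrier_mat dA dA"
  shows "tr (channel dA dB U \<beta> X * Y) =
     tr (X * ptrace_B dA dB (tensor (1\<^sub>m dA) \<beta> * (dag U * tensor Y (1\<^sub>m dB) * U)))"
proof -
  let ?n = "dA*dB"
  define T1 where "T1 = tensor Y (1\<^sub>m dB)"
  define Tx where "Tx = tensor X (1\<^sub>m dB)"
  define Ib where "Ib = tensor (1\<^sub>m dA) \<beta>"
  define N where "N = dag U * T1 * U"
  have T1c: "T1 \<in> carrier_mat ?n ?n" unfolding T1_def using Y by auto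
  have Txc: "Tx \<in> carrier_mat ?n ?n" unfolding Tx_def using X by auto
  have Ibc: "Ib \<in> carrier_mat ?n ?n" unfolding Ib_def using B by auto
  have Nc: "N \<in> carrier_mat ?n ?n" unfolding N_def using U T1c by auto
  have XB: "tensor X \<beta> = Tx * Ib" unfolding Tx_def Ib_def using X B by (subst tensor_mult, auto)
  have XBc: "tensor X \<beta> \<in> carrier_mat ?n ?n" using X B by auto
  have "tr (channel dA dB U \<beta> X * Y) = tr (ptrace_B dA dB (U * tensor X \<beta> * dag U * T1))"
    unfolding channel_def T1_def using U XBc Y by (subst ptrace_right, auto)
  also have "\<dots> = tr (U * tensor X \<beta> * dag U * T1)" using U XBc T1c by (intro tr_ptrace, auto)
  also have "\<dots> = tr (U * (tensor X \<beta> * dag U * T1))"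
    using U XBc T1c by (simp add: assoc_mult_mat[of _ ?n ?n _ ?n _ ?n] mult_carrier_mat[of _ ?n ?n _ ?n])
  also have "\<dots> = tr ((tensor X \<beta> * dag U * T1) * U)"
    using U XBc T1c by (intro tr_mult_comm, auto intro!: mult_carrier_mat[of _ ?n ?n _ ?n])
  also have "\<dots> = tr (Tx * (Ib * N))" unfolding XB N_def
    using U Txc Ibc T1c by (simp add: assoc_mult_mat[of _ ?n ?n _ ?n _ ?n] mult_carrier_mat[of _ ?n ?n _ ?n])
  also have "\<dots> = tr (ptrace_B dA dB (Tx * (Ib * N)))" using Txc Ibc Nc by (intro tr_ptrace[symmetric], auto)
  also have "\<dots> = tr (X * ptrace_B dA dB (Ib * N))" unfolding Tx_def using X Ibc Nc by (subst ptrace_left, auto)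
  finally show ?thesis unfolding Ib_def N_def T1_def .
qed

lemma hs_channel: assumes U: "U \<in> carrier_mat (dA*dB) (dA*dB)" and B: "\<beta> \<in> carrier_mat dB dB"
  shows "hs_adjoint dA dA (channel dA dB U \<beta>) = (\<lambda>Y. if Y \<in> carrier_mat dA dA then
     ptrace_B dA dB (tensor (1\<^sub>m dA) \<beta> * (dag U * tensor Y (1\<^sub>m dB) * U)) else 0\<^sub>m dA dA)"
  by (rule hs_adj_eq, auto simp: channel_adj[OF U B])



theorem mainTheorem2:
  fixes dA dB :: nat and U \<alpha> \<beta> :: "complex mat"
  assumes "unitary (dA * dB) U"
    and "density dB \<beta>"
    and "density dA \<alpha>"
    and "invertible_mat (channel dA dB U \<beta> \<alpha>)"
  shows "\<forall>X \<in> carrier_mat dA dA.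
           petz dA (channel dA dB U \<beta>) \<alpha> X =
           ptrace_B dA dB (dag U * A_map dA dB (U * tensor \<alpha> \<beta> * dag U) X * U)"
proof
  fix X :: "complex mat" assume X: "X \<in> carrier_mat dA dA"
  let ?n = "dA*dB"
  note Uu = assms(1)
  have Uc: "U \<in> carrier_mat ?n ?n" using Uu unitary_carrier by auto
  have UdU: "dag U * U = 1\<^sub>m ?n" and UUd: "U * dag U = 1\<^sub>m ?n" using Uu unitary_def by auto
  have pa: "psd dA \<alpha>" and pb: "psd dB \<beta>" using assms(2,3) unfolding density_def by auto
  have ac: "\<alpha> \<in> carrier_mat dA dA" and bc: "\<beta> \<in> carrier_mat dB dB" using pa pb unfolding psd_def by auto
  define Sa where "Sa = msqrt \<alpha>"
  define Sb where "Sb = msqrt \<beta>"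
  have pSa: "psd dA Sa" and SaSa: "Sa * Sa = \<alpha>" using msqrt_char[OF pa] unfolding Sa_def by auto
  have pSb: "psd dB Sb" and SbSb: "Sb * Sb = \<beta>" using msqrt_char[OF pb] unfolding Sb_def by auto
  have Sac: "Sa \<in> carrier_mat dA dA" and Sbc: "Sb \<in> carrier_mat dB dB" using pSa pSb unfolding psd_def by auto
  define K where "K = tensor Sa Sb"
  have Kc: "K \<in> carrier_mat ?n ?n" unfolding K_def using Sac Sbc by auto
  define \<Omega> where "\<Omega> = U * tensor \<alpha> \<beta> * dag U"
  define R where "R = U * K * dag U"
  have pR: "psd ?n R" unfolding R_def K_def using psd_tensor_conj[OF pSa pSb Uc] .
  have KK: "K * K = tensor \<alpha> \<beta>" unfolding K_def using Sac Sbc SaSa SbSb by (subst tensor_mult, auto)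
  have RR: "R * R = \<Omega>" unfolding R_def \<Omega>_def sq_form[OF Uu Kc] KK ..
  have pO: "psd ?n \<Omega>" using psd_sq[OF pR] RR by simp
  have sO: "msqrt \<Omega> = R" using msqrt_eq[OF pO pR RR] .
  define E where "E = ptrace_B dA dB \<Omega>"
  have chE: "channel dA dB U \<beta> \<alpha> = E" unfolding channel_def E_def \<Omega>_def ..
  have pE: "psd dA E" unfolding E_def using ptrace_psd[OF pO] .
  define T where "T = msqrt E"
  have pT: "psd dA T" and TT: "T * T = E" using msqrt_char[OF pE] unfolding T_def by auto
  have Tc: "T \<in> carrier_mat dA dA" using pT unfolding psd_def by auto
  have Tic: "msqrt_inv E \<in> carrier_mat dA dA"
    unfolding msqrt_inv_def T_def[symmetric] using minv_sqrt[OF Tc TT] assms(4) chE by simp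
  define Y where "Y = msqrt_inv E * X * msqrt_inv E"
  have Yc: "Y \<in> carrier_mat dA dA" unfolding Y_def using Tic X by auto
  define T1 where "T1 = tensor Y (1\<^sub>m dB)"
  have T1c: "T1 \<in> carrier_mat ?n ?n" unfolding T1_def using Yc by auto
  define N where "N = dag U * T1 * U"
  have Nc: "N \<in> carrier_mat ?n ?n" unfolding N_def using Uc T1c by auto
  define Ib where "Ib = tensor (1\<^sub>m dA) \<beta>"
  have Ibc: "Ib \<in> carrier_mat ?n ?n" unfolding Ib_def using bc by auto
  define Ka where "Ka = tensor Sa (1\<^sub>m dB)"
  define Kb where "Kb = tensor (1\<^sub>m dA) Sb"
  have Kac: "Ka \<in> carrier_mat ?n ?n" unfolding Ka_def using Sac by auto
  have Kbc: "Kb \<in> carrier_mat ?n ?n" unfolding Kb_def using Sbc by auto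
  have K1: "K = Ka * Kb" unfolding K_def Ka_def Kb_def using Sac Sbc by (subst tensor_mult, auto)
  have K2: "K = Kb * Ka" unfolding K_def Ka_def Kb_def using Sac Sbc by (subst tensor_mult, auto)
  have KbKb: "Kb * Kb = Ib" unfolding Kb_def Ib_def using Sbc SbSb by (subst tensor_mult, auto)
  have LHS: "petz dA (channel dA dB U \<beta>) \<alpha> X = Sa * ptrace_B dA dB (Ib * N) * Sa"
    unfolding petz_def hs_channel[OF Uc bc] chE Sa_def[symmetric] Y_def[symmetric] Ib_def N_def T1_def
    using Yc by simp
  have "A_map dA dB \<Omega> X = R * T1 * R"
    unfolding A_map_def sO E_def[symmetric] Y_def[symmetric] T1_def ..
  then have "dag U * A_map dA dB \<Omega> X * U = dag U * (U * K * dag U * T1 * (U * K * dag U)) * U"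
    unfolding R_def by simp
  also have "\<dots> = (dag U * U) * K * (dag U * T1 * U) * K * (dag U * U)"
    using Uc Kc T1c by (simp add: assoc_mult_mat[of _ ?n ?n _ ?n _ ?n] mult_carrier_mat[of _ ?n ?n _ ?n])
  also have "\<dots> = K * N * K" unfolding UdU N_def using Kc Nc[unfolded N_def] by simp
  also have "\<dots> = (Ka * Kb) * N * (Kb * Ka)" by (metis K1 K2)
  also have "\<dots> = Ka * ((Kb * N) * Kb) * Ka"
    using Kac Kbc Nc by (simp add: assoc_mult_mat[of _ ?n ?n _ ?n _ ?n] mult_carrier_mat[of _ ?n ?n _ ?n])
  finally have M: "dag U * A_map dA dB \<Omega> X * U = Ka * ((Kb * N) * Kb) * Ka" .
  have "ptrace_B dA dB (Ka * ((Kb * N) * Kb) * Ka) = Sa * ptrace_B dA dB ((Kb * N) * Kb) * Sa"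
    unfolding Ka_def using Sac Kbc Nc
    by (subst ptrace_right, auto intro!: mult_carrier_mat[of _ ?n ?n _ ?n], subst ptrace_left, auto)
  also have "ptrace_B dA dB ((Kb * N) * Kb) = ptrace_B dA dB (Kb * (Kb * N))"
    unfolding Kb_def using Sbc Kbc[unfolded Kb_def] Nc by (subst ptrace_cyc[symmetric], auto)
  also have "Kb * (Kb * N) = Ib * N" unfolding KbKb[symmetric] using Kbc Nc by (simp add: assoc_mult_mat[of _ ?n ?n _ ?n _ ?n])
  finally show "petz dA (channel dA dB U \<beta>) \<alpha> X =
           ptrace_B dA dB (dag U * A_map dA dB (U * tensor \<alpha> \<beta> * dag U) X * U)"
    unfolding LHS \<Omega>_def[symmetric] M by (rule sym)
qed

end
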